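(* Let $\Sigma\in\mathbb{R}^{p\times p}$ with $\Sigma\succ0$, $\theta_0\in\mathbb{R}^p$ with $s_0=\|\theta_0\|_0$, $\xi>0$, and let $\widehat\theta^\infty=\widehat\theta^\infty(\xi)$ be the unique minimizer of $\theta\mapsto\frac12\langle\theta-\theta_0,\Sigma(\theta-\theta_0)\rangle+\xi\|\theta\|_1$. Then $$\|\widehat\theta^\infty\|_0\le\Big(1+\frac{4\|\Sigma\|_2}{\kappa(s_0,1)}\Big)s_0.$$
   Context: $\kappa(s,c_0)=\min_{J\subseteq[p],|J|\le s}\ \min_{u\in\mathbb{R}^p,\ \|u_{J^c}\|_1\le c_0\|u_J\|_1}\frac{\langle u,\Sigma u\rangle}{\|u\|_2^2}$; $\|\cdot\|_0$ counts nonzero entries; $\|\Sigma\|_2$ is the spectral norm. *)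

theory Defs
  imports "HOL-Analysis.Analysis"
begin

definition l0norm :: "real ^ 'n \<Rightarrow> nat" where
  "l0norm x = card {i. x $ i \<noteq> 0}"

definition l1norm :: "real ^ 'n \<Rightarrow> real" where
  "l1norm x = (\<Sum>i\<in>UNIV. \<bar>x $ i\<bar>)"

definition l1norm_on :: "'n set \<Rightarrow> real ^ 'n \<Rightarrow> real" where
  "l1norm_on J x = (\<Sum>i\<in>J. \<bar>x $ i\<bar>)"

definition kappa :: "real ^ 'n ^ 'n \<Rightarrow> nat \<Rightarrow> real \<Rightarrow> real" where
  "kappa \<Sigma> s c0 = Inf {(u \<bullet> (\<Sigma> *v u)) / (norm u)^2 | J u.
      card (J :: 'n set) \<le> s \<and> u \<noteq> 0 \<and> l1norm_on (- J) u \<le> c0 * l1norm_on J u}"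

definition spec_norm :: "real ^ 'n ^ 'n \<Rightarrow> real" where
  "spec_norm \<Sigma> = onorm (\<lambda>x. \<Sigma> *v x)"

definition pos_def :: "real ^ 'n ^ 'n \<Rightarrow> bool" where
  "pos_def \<Sigma> \<longleftrightarrow> transpose \<Sigma> = \<Sigma> \<and> (\<forall>u. u \<noteq> 0 \<longrightarrow> u \<bullet> (\<Sigma> *v u) > 0)"

definition lasso_obj :: "real ^ 'n ^ 'n \<Rightarrow> real ^ 'n \<Rightarrow> real \<Rightarrow> real ^ 'n \<Rightarrow> real" where
  "lasso_obj \<Sigma> \<theta>0 \<xi> \<theta> = (1/2) * ((\<theta> - \<theta>0) \<bullet> (\<Sigma> *v (\<theta> - \<theta>0))) + \<xi> * l1norm \<theta>"

end

theory Submission imports Defs begin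

lemma sym_form:
  fixes S :: "real^'n^'n"
  assumes "transpose S = S"
  shows "x \<bullet> (S *v y) = y \<bullet> (S *v x)"
proof -
  have "x \<bullet> (S *v y) = (x v* S) \<bullet> y" by (simp add: dot_lmul_matrix)
  also have "x v* S = S *v x" by (metis assms vector_transpose_matrix)
  finally show ?thesis by (simp add: inner_commute)
qed

lemma quad_expand:
  fixes S :: "real^'n^'n"
  assumes "transpose S = S"
  shows "(a+b) \<bullet> (S *v (a+b)) = a \<bullet> (S *v a) + 2*(b \<bullet> (S *v a)) + b \<bullet> (S *v b)"
  using sym_form[OF assms, of a b]
  by (simp add: matrix_vector_right_distrib inner_add_left inner_add_right)

lemma psd:
  fixes S :: "real^'n^'n"
  assumes "pos_def S" shows "0 \<le> u \<bullet> (S *v u)"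
  using assms unfolding pos_def_def by (cases "u = 0") (auto intro: less_imp_le)

lemma cs_form:
  fixes S :: "real^'n^'n"
  assumes "pos_def S"
  shows "(x \<bullet> (S *v y))^2 \<le> (x \<bullet> (S *v x)) * (y \<bullet> (S *v y))"
proof (cases "y = 0")
  case True then show ?thesis by simp
next
  case False
  have sym: "transpose S = S" using assms by (simp add: pos_def_def)
  define b where "b = y \<bullet> (S *v y)"
  define c where "c = x \<bullet> (S *v y)"
  define a where "a = x \<bullet> (S *v x)"
  have bpos: "b > 0" using assms False by (simp add: pos_def_def b_def)
  define t where "t = c / b"
  have "0 \<le> (x + (-t) *\<^sub>R y) \<bullet> (S *v (x + (-t) *\<^sub>R y))" by (rule psd[OF assms])
  also have "\<dots> = a + 2*((-t) * c) + t*t*b"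
    unfolding quad_expand[OF sym]
    using sym_form[OF sym, of x y] matrix_vector_mult_scaleR[of S "-t" y]
    by (simp add: a_def b_def c_def matrix_vector_mult_scaleR)
  also have "\<dots> = a - c^2/b" using bpos by (simp add: t_def field_simps power2_eq_square)
  finally have "c^2/b \<le> a" by simp
  then have "c^2 \<le> a * b" using bpos by (simp add: field_simps)
  then show ?thesis by (simp add: a_def b_def c_def)
qed

lemma norm_Sx:
  fixes S :: "real^'n^'n"
  assumes "pos_def S"
  shows "(norm (S *v x))^2 \<le> spec_norm S * (x \<bullet> (S *v x))"
proof -
  have sym: "transpose S = S" using assms by (simp add: pos_def_def)
  define y where "y = S *v x"
  have e: "x \<bullet> (S *v y) = norm y ^ 2"
    using sym_form[OF sym, of x y] by (simp add: y_def power2_norm_eq_inner)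
  have "(norm y ^ 2)^2 \<le> (x \<bullet> (S *v x)) * (y \<bullet> (S *v y))"
    using cs_form[OF assms, of x y] e by simp
  also have "y \<bullet> (S *v y) \<le> norm y * norm (S *v y)" by (rule norm_cauchy_schwarz)
  also have "norm (S *v y) \<le> spec_norm S * norm y"
    unfolding spec_norm_def by (rule onorm[OF matrix_vector_mul_bounded_linear])
  finally have "(norm y ^ 2)^2 \<le> (x \<bullet> (S *v x)) * (norm y * (spec_norm S * norm y))"
    using psd[OF assms, of x] by (simp add: mult_left_mono mult_right_mono) 
  then have "norm y ^ 2 * norm y ^ 2 \<le> (spec_norm S * (x \<bullet> (S *v x))) * norm y ^ 2"
    by (simp add: power2_eq_square algebra_simps)
  then have "norm y ^ 2 \<le> spec_norm S * (x \<bullet> (S *v x))"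
  proof (cases "y = 0")
    case True
    have "0 \<le> spec_norm S" unfolding spec_norm_def
      by (rule onorm_pos_le[OF matrix_vector_mul_bounded_linear])
    then show ?thesis using True psd[OF assms, of x] by simp
  next
    case False
    then have "norm y ^ 2 > 0" by simp
    then show ?thesis using \<open>norm y ^ 2 * norm y ^ 2 \<le> _\<close> mult_le_cancel_right_pos by blast
  qed
  then show ?thesis by (simp add: y_def)
qed

lemma lower_bound:
  fixes S :: "real^'n^'n"
  assumes "pos_def S"
  shows "\<exists>c>0. \<forall>u. c * (norm u)^2 \<le> u \<bullet> (S *v u)"
proof -
  have cont: "continuous_on (sphere 0 1) (\<lambda>u::real^'n. u \<bullet> (S *v u))"
    by (intro continuous_intros linear_continuous_on bounded_linear.linear matrix_vector_mul_bounded_linear)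
  have ne: "sphere (0::real^'n) 1 \<noteq> {}"
    using norm_axis_1[of undefined] by (metis empty_iff mem_sphere_0)
  obtain x where x: "x \<in> sphere 0 1" and mn: "\<forall>y\<in>sphere 0 1. x \<bullet> (S *v x) \<le> y \<bullet> (S *v y)"
    using continuous_attains_inf[OF compact_sphere ne cont] by blast
  have "x \<noteq> 0" using x by auto
  then have cpos: "x \<bullet> (S *v x) > 0" using assms by (auto simp: pos_def_def)
  have "\<forall>u. (x \<bullet> (S *v x)) * (norm u)^2 \<le> u \<bullet> (S *v u)"
  proof
    fix u :: "real^'n"
    show "(x \<bullet> (S *v x)) * (norm u)^2 \<le> u \<bullet> (S *v u)"
    proof (cases "u = 0")
      case True then show ?thesis by simp
    next
      case False
      define v where "v = (1/norm u) *\<^sub>R u"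
      have "v \<in> sphere 0 1" using False by (simp add: v_def)
      then have "x \<bullet> (S *v x) \<le> v \<bullet> (S *v v)" using mn by blast
      also have "v \<bullet> (S *v v) = (u \<bullet> (S *v u)) / (norm u)^2"
        by (simp add: v_def matrix_vector_mult_scaleR power2_eq_square)
      finally show ?thesis using False by (simp add: field_simps)
    qed
  qed
  then show ?thesis using cpos by blast
qed
lemma l1_split:
  fixes x :: "real^'n"
  shows "l1norm x = l1norm_on J x + l1norm_on (-J) x"
  unfolding l1norm_def l1norm_on_def
  by (metis Compl_partition Diff_Compl Diff_cancel finite_class.finite_UNIV
      double_compl finite_Un sum.union_disjoint Int_commute Compl_disjoint2)

lemma norm_sq_sum:
  fixes x :: "real^'n"
  shows "norm x ^ 2 = (\<Sum>i\<in>UNIV. (x$i)^2)"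
  unfolding power2_norm_eq_inner inner_vec_def by (simp add: power2_eq_square)

lemma l1_perturb:
  fixes x :: "real^'n"
  assumes "0 < t" "t \<le> \<bar>x$i\<bar>"
  shows "l1norm (x + (-(t * sgn (x$i))) *\<^sub>R axis i 1) = l1norm x - t"
proof -
  define w where "w = (-(t * sgn (x$i))) *\<^sub>R axis i (1::real)"
  have wi: "w $ i = -(t * sgn (x$i))" by (simp add: w_def axis_def)
  have wj: "j \<noteq> i \<Longrightarrow> w $ j = 0" for j by (simp add: w_def axis_def)
  have xi: "\<bar>x$i + w$i\<bar> = \<bar>x$i\<bar> - t"
    using assms unfolding wi by (cases "x$i > 0"; cases "x$i < 0") (auto simp: sgn_if)
  have "l1norm (x + w) = \<bar>x$i + w$i\<bar> + (\<Sum>j\<in>UNIV - {i}. \<bar>(x+w)$j\<bar>)"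
    unfolding l1norm_def by (simp add: sum.remove[of UNIV i])
  also have "(\<Sum>j\<in>UNIV - {i}. \<bar>(x+w)$j\<bar>) = (\<Sum>j\<in>UNIV - {i}. \<bar>x$j\<bar>)"
    by (rule sum.cong) (auto simp: wj)
  also have "l1norm x = \<bar>x$i\<bar> + (\<Sum>j\<in>UNIV - {i}. \<bar>x$j\<bar>)"
    unfolding l1norm_def by (simp add: sum.remove[of UNIV i])
  ultimately show ?thesis using xi by (simp add: w_def)
qed

lemma coord_bound:
  fixes S :: "real^'n^'n" and th0 th :: "real^'n"
  assumes pd: "pos_def S" and xi: "\<xi> > 0"
    and mn: "\<forall>\<theta>. lasso_obj S th0 \<xi> \<theta> \<ge> lasso_obj S th0 \<xi> th"
    and nz: "th $ i \<noteq> 0"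
  shows "\<xi> \<le> \<bar>(S *v (th - th0)) $ i\<bar>"
proof (rule ccontr)
  assume neg: "\<not> ?thesis"
  define r where "r = S *v (th - th0)"
  define q where "q = (th - th0) \<bullet> r"
  define e where "e = axis i (1::real)"
  define d where "d = e \<bullet> (S *v e)"
  define sn where "sn = sgn (th $ i)"
  define a where "a = \<xi> - \<bar>r$i\<bar>"
  have apos: "a > 0" using neg by (simp add: a_def r_def)
  have dnn: "d \<ge> 0" using psd[OF pd] by (simp add: d_def)
  have sym: "transpose S = S" using pd by (simp add: pos_def_def)
  define t where "t = min \<bar>th$i\<bar> (a/(d+1))"
  have tpos: "t > 0" using nz apos dnn by (simp add: t_def)
  have tle: "t \<le> \<bar>th$i\<bar>" by (simp add: t_def)
  have td: "t * d < a"
  proof -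
    have "t * d \<le> a/(d+1) * d" using dnn by (intro mult_right_mono) (auto simp: t_def)
    also have "\<dots> < a" using apos dnn by (simp add: field_simps)
    finally show ?thesis .
  qed
  have sg2: "sn * sn = 1" using nz by (simp add: sn_def sgn_if)
  define w where "w = (-(t * sn)) *\<^sub>R e"
  have l1: "l1norm (th + w) = l1norm th - t"
    using l1_perturb[OF tpos tle] by (simp add: w_def e_def sn_def)
  have wr: "w \<bullet> r = -(t * sn) * r$i" by (simp add: w_def e_def inner_axis')
  have wSw: "w \<bullet> (S *v w) = t * t * d"
  proof -
    have "w \<bullet> (S *v w) = (t* sn)*(t* sn) * d"
      using matrix_vector_mult_scaleR[of S "-(t* sn)" e]
      by (simp add: w_def d_def del: scaleR_minus_left)
    also have "\<dots> = t*t*(sn* sn)*d" by simp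
    finally show ?thesis using sg2 by simp
  qed
  have "lasso_obj S th0 \<xi> th \<le> lasso_obj S th0 \<xi> (th + w)" using mn by blast
  also have "lasso_obj S th0 \<xi> (th + w) = (1/2)*q + w \<bullet> r + (1/2)*(w \<bullet> (S *v w)) + \<xi> * l1norm (th + w)"
  proof -
    have "th + w - th0 = (th - th0) + w" by simp
    then show ?thesis unfolding lasso_obj_def
      using quad_expand[OF sym, of "th - th0" w] by (simp add: q_def r_def algebra_simps)
  qed
  finally have "(1/2)*q + \<xi> * l1norm th \<le> (1/2)*q + w \<bullet> r + (1/2)*(w \<bullet> (S *v w)) + \<xi> * (l1norm th - t)"
    unfolding l1 by (simp add: lasso_obj_def q_def r_def)
  then have "\<xi> * t \<le> -(t * sn) * r$i + (1/2) * (t*t*d)" unfolding wr wSw by (simp add: algebra_simps)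
  moreover have "-(t * sn) * r$i \<le> t * \<bar>r$i\<bar>"
  proof -
    have "\<bar>sn\<bar> \<le> 1" by (simp add: sn_def sgn_if)
    then have "- sn * r$i \<le> \<bar>r$i\<bar>"
      by (metis abs_ge_minus_self abs_mult abs_sgn_eq mult.commute mult_minus_left order_trans abs_mult_less
           mult_left_le_one_le abs_ge_zero)
    then show ?thesis using tpos by (metis mult_left_mono less_imp_le mult.assoc mult_minus_right mult_minus_left)
  qed
  ultimately have "\<xi> * t \<le> t * \<bar>r$i\<bar> + (1/2)*(t*t*d)" by linarith
  then have "t * \<xi> \<le> t * (\<bar>r$i\<bar> + (1/2)*(t*d))" by (simp add: algebra_simps)
  then have "\<xi> \<le> \<bar>r$i\<bar> + (1/2)*(t*d)" using tpos by (simp add: mult_le_cancel_left_pos)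
  then show False using td apos dnn tpos by (simp add: a_def)
qed
theorem lemma3p1:
  fixes \<Sigma> :: "real ^ 'n ^ 'n" and \<theta>0 \<theta>hat :: "real ^ 'n" and \<xi> :: real
  assumes "pos_def \<Sigma>"
    and "\<xi> > 0"
    and "\<forall>\<theta>. lasso_obj \<Sigma> \<theta>0 \<xi> \<theta> \<ge> lasso_obj \<Sigma> \<theta>0 \<xi> \<theta>hat"
    and "\<forall>\<theta>'. (\<forall>\<theta>. lasso_obj \<Sigma> \<theta>0 \<xi> \<theta> \<ge> lasso_obj \<Sigma> \<theta>0 \<xi> \<theta>') \<longrightarrow> \<theta>' = \<theta>hat"
  shows "real (l0norm \<theta>hat)
           \<le> (1 + 4 * spec_norm \<Sigma> / kappa \<Sigma> (l0norm \<theta>0) 1) * real (l0norm \<theta>0)"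
proof -
  note pd = assms(1) and xi = assms(2) and mn = assms(3)
  define D where "D = \<theta>hat - \<theta>0"
  define r where "r = \<Sigma> *v D"
  define q where "q = D \<bullet> r"
  define S0 where "S0 = {i. \<theta>0 $ i \<noteq> 0}"
  define S where "S = {i. \<theta>hat $ i \<noteq> 0}"
  define s0 where "s0 = card S0"
  define a where "a = l1norm_on S0 D"
  define b where "b = l1norm_on (-S0) D"
  have qnn: "q \<ge> 0" using psd[OF pd] by (simp add: q_def r_def)
  have bnn: "b \<ge> 0" by (simp add: b_def l1norm_on_def sum_nonneg)
  have basic: "(1/2) * q + \<xi> * l1norm \<theta>hat \<le> \<xi> * l1norm \<theta>0"
    using mn[rule_format, of \<theta>0] by (simp add: lasso_obj_def q_def r_def D_def)
  have B: "l1norm \<theta>0 = l1norm_on S0 \<theta>0"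
  proof -
    have "l1norm_on (-S0) \<theta>0 = 0" by (simp add: l1norm_on_def S0_def)
    then show ?thesis using l1_split[of \<theta>0 S0] by simp
  qed
  have A: "l1norm \<theta>hat = l1norm_on S0 \<theta>hat + b"
  proof -
    have "l1norm_on (-S0) \<theta>hat = b"
      unfolding b_def l1norm_on_def by (rule sum.cong) (auto simp: S0_def D_def)
    then show ?thesis using l1_split[of \<theta>hat S0] by simp
  qed
  have tri: "l1norm_on S0 \<theta>0 - l1norm_on S0 \<theta>hat \<le> a"
    unfolding a_def l1norm_on_def sum_subtractf[symmetric]
    by (rule sum_mono) (auto simp: D_def)
  have key: "(1/2) * q \<le> \<xi> * (a - b)"
  proof -
    have "(1/2) * q \<le> \<xi> * (l1norm_on S0 \<theta>0 - l1norm_on S0 \<theta>hat - b)"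
      using basic A B by (simp add: algebra_simps)
    also have "\<dots> \<le> \<xi> * (a - b)" using tri xi by (intro mult_left_mono) auto
    finally show ?thesis .
  qed
  have cone: "b \<le> a"
  proof (rule ccontr)
    assume "\<not> b \<le> a"
    then have "\<xi> * (a - b) < 0" using xi by (simp add: mult_pos_neg)
    then show False using key qnn by simp
  qed
  have card_le: "card S \<le> s0 + card (S - S0)"
  proof -
    have "card S \<le> card (S0 \<union> (S - S0))" by (intro card_mono) auto
    also have "\<dots> \<le> card S0 + card (S - S0)" by (rule card_Un_le)
    finally show ?thesis by (simp add: s0_def)
  qed
  show ?thesis
  proof (cases "s0 = 0")
    case True
    then have "S0 = {}" by (simp add: s0_def)
    then have a0: "a = 0" by (simp add: a_def l1norm_on_def)
    then have "b \<le> 0" using cone by simp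
    then have b0: "b = 0" using bnn by simp
    have "S = {}"
    proof (rule ccontr)
      assume "S \<noteq> {}"
      then obtain i where i: "\<theta>hat $ i \<noteq> 0" by (auto simp: S_def)
      have "\<bar>D $ i\<bar> \<le> b" unfolding b_def l1norm_on_def using \<open>S0 = {}\<close>
        by (intro member_le_sum) auto
      moreover have "D $ i = \<theta>hat $ i" using \<open>S0 = {}\<close> by (simp add: D_def S0_def)
      ultimately show False using i b0 by simp
    qed
    then show ?thesis using True by (simp add: l0norm_def S_def s0_def S0_def)
  next
    case False
    obtain c where cpos: "c > 0" and cb: "\<And>u. c * (norm u)^2 \<le> u \<bullet> (\<Sigma> *v u)"
      using lower_bound[OF pd] by blast
    define K where "K = {(u \<bullet> (\<Sigma> *v u)) / (norm u)^2 | J u.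
      card (J :: 'n set) \<le> l0norm \<theta>0 \<and> u \<noteq> 0 \<and> l1norm_on (- J) u \<le> 1 * l1norm_on J u}"
    have kdef: "kappa \<Sigma> (l0norm \<theta>0) 1 = Inf K" by (simp add: kappa_def K_def)
    have s0l0: "l0norm \<theta>0 = s0" by (simp add: l0norm_def s0_def S0_def)
    have Kc: "\<And>x. x \<in> K \<Longrightarrow> c \<le> x"
    proof -
      fix x assume "x \<in> K"
      then obtain u where u: "u \<noteq> 0" and x: "x = (u \<bullet> (\<Sigma> *v u)) / (norm u)^2"
        unfolding K_def by blast
      have "norm u ^ 2 > 0" using u by simp
      then show "c \<le> x" using cb[of u] by (simp add: x field_simps)
    qed
    have Kne: "K \<noteq> {}"
    proof -
      have "\<theta>0 \<noteq> 0" using False by (auto simp: s0_def S0_def)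
      moreover have "l1norm_on (- S0) \<theta>0 = 0" by (simp add: l1norm_on_def S0_def)
      moreover have "l1norm_on S0 \<theta>0 \<ge> 0" by (simp add: l1norm_on_def sum_nonneg)
      ultimately have "(\<theta>0 \<bullet> (\<Sigma> *v \<theta>0)) / (norm \<theta>0)^2 \<in> K"
        unfolding K_def using s0l0 by (intro CollectI exI[of _ S0] exI[of _ \<theta>0]) (simp add: s0_def)
      then show ?thesis by blast
    qed
    have kc: "c \<le> kappa \<Sigma> (l0norm \<theta>0) 1" unfolding kdef by (rule cInf_greatest[OF Kne Kc])
    define k where "k = kappa \<Sigma> (l0norm \<theta>0) 1"
    have kpos: "k > 0" using kc cpos by (simp add: k_def)
    have sp: "spec_norm \<Sigma> \<ge> 0" unfolding spec_norm_def
      by (rule onorm_pos_le[OF matrix_vector_mul_bounded_linear])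
    have qb: "q \<le> 4 * \<xi>^2 * s0 / k"
    proof (cases "D = 0")
      case True then show ?thesis using kpos xi by (simp add: q_def r_def)
    next
      case Dnz: False
      have inK: "q / (norm D)^2 \<in> K"
        unfolding K_def q_def r_def using Dnz cone s0l0
        unfolding a_def b_def s0_def by (intro CollectI exI[of _ S0] exI[of _ D]) simp
      have "k \<le> q / (norm D)^2" unfolding k_def kdef
        by (rule cInf_lower[OF inK]) (auto simp: bdd_below_def intro: Kc)
      then have kD: "k * (norm D)^2 \<le> q" using Dnz by (simp add: field_simps)
      have a2: "a^2 \<le> s0 * (norm D)^2"
      proof -
        have "a^2 \<le> (\<Sum>i\<in>S0. (\<bar>D$i\<bar>)^2) * real (card S0)"
          unfolding a_def l1norm_on_def by (rule sum_squared_le_sum_of_squares)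
        also have "(\<Sum>i\<in>S0. (\<bar>D$i\<bar>)^2) \<le> (\<Sum>i\<in>UNIV. (D$i)^2)"
          unfolding power2_abs by (intro sum_mono2) auto
        also have "\<dots> = (norm D)^2" by (simp add: norm_sq_sum)
        finally show ?thesis by (simp add: s0_def mult.commute mult_right_mono)
      qed
      have qpos: "q > 0" using pd Dnz by (simp add: pos_def_def q_def r_def)
      have "\<xi> * b \<ge> 0" using xi bnn by simp
      then have "q \<le> 2 * \<xi> * a" using key by (simp add: algebra_simps)
      then have "q^2 \<le> (2 * \<xi> * a)^2"
        using qnn by (intro power_mono) auto
      also have "\<dots> = 4 * \<xi>^2 * a^2" by (simp add: power2_eq_square)
      also have "\<dots> \<le> 4 * \<xi>^2 * (s0 * (norm D)^2)" using a2 by (intro mult_left_mono) auto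
      also have "\<dots> \<le> 4 * \<xi>^2 * s0 * (q / k)"
      proof -
        have "(norm D)^2 \<le> q / k" using kD kpos by (simp add: field_simps)
        then have "(4 * \<xi>^2 * s0) * (norm D)^2 \<le> (4 * \<xi>^2 * s0) * (q / k)"
          by (intro mult_left_mono) auto
        then show ?thesis by (simp add: mult.assoc)
      qed
      finally have "q * q \<le> (4 * \<xi>^2 * s0 / k) * q" by (simp add: power2_eq_square)
      then show ?thesis using qpos mult_le_cancel_right_pos[of q q "4 * \<xi>^2 * s0 / k"] by simp
    qed
    define m where "m = card (S - S0)"
    have m_bound: "m * \<xi>^2 \<le> spec_norm \<Sigma> * q"
    proof -
      have "m * \<xi>^2 = (\<Sum>i\<in>S - S0. \<xi>^2)" by (simp add: m_def)
      also have "\<dots> \<le> (\<Sum>i\<in>S - S0. (r$i)^2)"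
      proof (rule sum_mono)
        fix i assume "i \<in> S - S0"
        then have "\<theta>hat $ i \<noteq> 0" by (simp add: S_def)
        then have "\<xi> \<le> \<bar>r$i\<bar>" using coord_bound[OF pd xi mn] by (simp add: r_def D_def)
        then show "\<xi>^2 \<le> (r$i)^2" using xi by (metis abs_le_square_iff abs_of_pos)
      qed
      also have "\<dots> \<le> (\<Sum>i\<in>UNIV. (r$i)^2)" by (intro sum_mono2) auto
      also have "\<dots> = (norm r)^2" by (simp add: norm_sq_sum)
      also have "\<dots> \<le> spec_norm \<Sigma> * q" unfolding r_def q_def by (rule norm_Sx[OF pd])
      finally show ?thesis .
    qed
    have "m * \<xi>^2 \<le> (4 * spec_norm \<Sigma> * s0 / k) * \<xi>^2"
    proof -
      have "spec_norm \<Sigma> * q \<le> spec_norm \<Sigma> * (4 * \<xi>^2 * s0 / k)" using mult_left_mono[OF qb sp] .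
      moreover have "spec_norm \<Sigma> * (4 * \<xi>^2 * s0 / k) = (4 * spec_norm \<Sigma> * s0 / k) * \<xi>^2"
        by (simp add: field_simps)
      ultimately show ?thesis using m_bound by linarith
    qed
    moreover have "\<xi>^2 > 0" using xi by simp
    ultimately have mb: "m \<le> 4 * spec_norm \<Sigma> * s0 / k"
      using mult_le_cancel_right_pos[of "\<xi>^2" "real m" "4 * spec_norm \<Sigma> * s0 / k"] by blast
    have "real (l0norm \<theta>hat) \<le> s0 + m" using card_le by (simp add: l0norm_def S_def m_def)
    also have "\<dots> \<le> s0 + 4 * spec_norm \<Sigma> * s0 / k" using mb by simp
    also have "\<dots> = (1 + 4 * spec_norm \<Sigma> / k) * s0" by (simp add: field_simps)
    finally show ?thesis by (simp add: k_def s0l0)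
  qed
qed

end
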